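(* In the setting of the (tweaked) $s$-wide replacement product described in the context, let $z\in\mathbb F_2^{[n]}$ with $\mathrm{bias}(z)\le\eta_0$ and let $P_z$ be the diagonal matrix indexed by $[n]\times[d_1]^s$ with $(P_z)_{(v,h),(v,h)}=(-1)^{z_v}$. Suppose $\gamma\ge0$ is such that $\sigma_2(M_i)\le\gamma$ for all $0\le i\le s-2$. Then $$\Big\|\,M_{s-2}P_z\,M_{s-3}P_z\cdots M_1P_z\,M_0P_z\Big\|_{\mathrm{op}}\le(\eta_0+2\gamma)^{\lfloor (s-1)/2\rfloor}.$$
   Context: Let $G$ be a $d_1$-regular undirected graph on $[n]$ whose neighbours of each vertex $v$ are labeled $v_G[1],\dots,v_G[d_1]$, with rotation map $\mathrm{rot}_G:[n]\times[d_1]\to[n]\times[d_1]$, $\mathrm{rot}_G(v,j)=(v',j')$ iff $v_G[j]=v'$ and $v'_G[j']=v$; assume it is locally invertible, i.e. there is a bijection $\varphi:[d_1]\to[d_1]$ with $\mathrm{rot}_G(v,j)=(v_G[j],\varphi(j))$. Let $A_G$ be the normalized adjacency matrix of $G$. Let $H$ be a $d_2$-regular undirected graph on vertex set $[d_1]^s$ with normalized adjacency matrix $A_H$. For $i\in\{0,\dots,s-1\}$ let $\mathrm{Rot}_i:[n]\times[d_1]^s\to[n]\times[d_1]^s$ send $(v,(a_0,\dots,a_{s-1}))$ to $(v',(a_0,\dots,a_{i-1},a_i',a_{i+1},\dots,a_{s-1}))$ where $(v',a_i')=\mathrm{rot}_G(v,a_i)$, and let $G_i$ be the permutation matrix realizing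 $\mathrm{Rot}_i$ on $\mathbb R^{[n]\times[d_1]^s}=\mathbb R^{V(G)}\otimes\mathbb R^{V(H)}$. For every integer $i$ set $M_i=(I\otimes A_H)\,G_{i\bmod s}\,(I\otimes A_H)$. $\sigma_2(X)$ denotes the second largest singular value of $X$; norms and singular values are with respect to the inner product given by the uniform probability measure on coordinates (equivalently the standard ones, the space being fixed). $\mathrm{bias}(z)=|\mathbb E_{v\in[n]}(-1)^{z_v}|$. *)

theory Defs
  imports Complex_Main
begin

text \<open>Vectors are functions 'i => real, matrices are functions 'i => 'i => real; only the
  values on the finite index set V matter.  Norms are the standard Euclidean ones on R^V
  (operator norms and singular values coincide with those for the uniform probability measure).\<close>

definition mat_mul :: "'i set \<Rightarrow> ('i \<Rightarrow> 'i \<Rightarrow> real) \<Rightarrow> ('i \<Rightarrow> 'i \<Rightarrow> real) \<Rightarrow> ('i \<Rightarrow> 'i \<Rightarrow> real)" where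
  "mat_mul V A B = (\<lambda>p q. \<Sum>r\<in>V. A p r * B r q)"

definition mat_id :: "'i \<Rightarrow> 'i \<Rightarrow> real" where
  "mat_id = (\<lambda>p q. if p = q then 1 else 0)"

definition mat_vec :: "'i set \<Rightarrow> ('i \<Rightarrow> 'i \<Rightarrow> real) \<Rightarrow> ('i \<Rightarrow> real) \<Rightarrow> ('i \<Rightarrow> real)" where
  "mat_vec V A x = (\<lambda>p. \<Sum>q\<in>V. A p q * x q)"

definition vinner :: "'i set \<Rightarrow> ('i \<Rightarrow> real) \<Rightarrow> ('i \<Rightarrow> real) \<Rightarrow> real" where
  "vinner V x y = (\<Sum>p\<in>V. x p * y p)"

definition vnorm :: "'i set \<Rightarrow> ('i \<Rightarrow> real) \<Rightarrow> real" where
  "vnorm V x = sqrt (vinner V x x)"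

definition op_norm :: "'i set \<Rightarrow> ('i \<Rightarrow> 'i \<Rightarrow> real) \<Rightarrow> real" where
  "op_norm V A = Sup {vnorm V (mat_vec V A x) | x. vnorm V x \<le> 1}"

text \<open>Second largest singular value, via the Courant--Fischer min-max characterisation:
  sigma_2(A) = min over w of max { |A x| : |x| <= 1, x orthogonal to w }.\<close>
definition sigma2 :: "'i set \<Rightarrow> ('i \<Rightarrow> 'i \<Rightarrow> real) \<Rightarrow> real" where
  "sigma2 V A = Inf {Sup {vnorm V (mat_vec V A x) | x. vnorm V x \<le> 1 \<and> vinner V x w = 0} | w. True}"

text \<open>Vertices of H: tuples in [d1]^s, encoded as lists of length s with entries < d1
  (we use 0-based labels {0..<d1}).\<close>
definition tuples :: "nat \<Rightarrow> nat \<Rightarrow> nat list set" where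
  "tuples d1 s = {a. length a = s \<and> (\<forall>x\<in>set a. x < d1)}"

definition prod_vertices :: "nat \<Rightarrow> nat \<Rightarrow> nat \<Rightarrow> (nat \<times> nat list) set" where
  "prod_vertices n d1 s = {..<n} \<times> tuples d1 s"

text \<open>Rotation map of G given by the neighbour function nb (nb v j = v_G[j]) and the
  local-inversion bijection phi.\<close>
definition rotG :: "(nat \<Rightarrow> nat \<Rightarrow> nat) \<Rightarrow> (nat \<Rightarrow> nat) \<Rightarrow> nat \<times> nat \<Rightarrow> nat \<times> nat" where
  "rotG nb \<phi> = (\<lambda>(v, j). (nb v j, \<phi> j))"

definition loc_inv_rotation_graph :: "nat \<Rightarrow> nat \<Rightarrow> (nat \<Rightarrow> nat \<Rightarrow> nat) \<Rightarrow> (nat \<Rightarrow> nat) \<Rightarrow> bool" where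
  "loc_inv_rotation_graph n d1 nb \<phi> \<longleftrightarrow>
     bij_betw \<phi> {..<d1} {..<d1} \<and>
     (\<forall>v<n. \<forall>j<d1. nb v j < n \<and> rotG nb \<phi> (rotG nb \<phi> (v, j)) = (v, j))"

definition Rot :: "(nat \<Rightarrow> nat \<Rightarrow> nat) \<Rightarrow> (nat \<Rightarrow> nat) \<Rightarrow> nat \<Rightarrow> nat \<times> nat list \<Rightarrow> nat \<times> nat list" where
  "Rot nb \<phi> i = (\<lambda>(v, a). (nb v (a ! i), a[i := \<phi> (a ! i)]))"

definition Gmat :: "(nat \<Rightarrow> nat \<Rightarrow> nat) \<Rightarrow> (nat \<Rightarrow> nat) \<Rightarrow> nat \<Rightarrow> (nat \<times> nat list) \<Rightarrow> (nat \<times> nat list) \<Rightarrow> real" where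
  "Gmat nb \<phi> i = (\<lambda>p q. if p = Rot nb \<phi> i q then 1 else 0)"

text \<open>H is a d2-regular undirected (multi)graph on [d1]^s given by its adjacency matrix EH
  (EH a b = number of edges between a and b).\<close>
definition regular_graph_adj :: "nat list set \<Rightarrow> nat \<Rightarrow> (nat list \<Rightarrow> nat list \<Rightarrow> nat) \<Rightarrow> bool" where
  "regular_graph_adj W d2 EH \<longleftrightarrow>
     (\<forall>a b. EH a b \<noteq> 0 \<longrightarrow> a \<in> W \<and> b \<in> W) \<and>
     (\<forall>a b. EH a b = EH b a) \<and>
     (\<forall>a\<in>W. (\<Sum>b\<in>W. EH a b) = d2)"

definition norm_adj :: "nat \<Rightarrow> (nat list \<Rightarrow> nat list \<Rightarrow> nat) \<Rightarrow> nat list \<Rightarrow> nat list \<Rightarrow> real" where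
  "norm_adj d2 EH = (\<lambda>a b. real (EH a b) / real d2)"

definition I_tensor :: "(nat list \<Rightarrow> nat list \<Rightarrow> real) \<Rightarrow> (nat \<times> nat list) \<Rightarrow> (nat \<times> nat list) \<Rightarrow> real" where
  "I_tensor A = (\<lambda>(v, a) (w, b). if v = w then A a b else 0)"

definition Mmat :: "nat \<Rightarrow> nat \<Rightarrow> nat \<Rightarrow> nat \<Rightarrow> (nat \<Rightarrow> nat \<Rightarrow> nat) \<Rightarrow> (nat \<Rightarrow> nat)
    \<Rightarrow> (nat list \<Rightarrow> nat list \<Rightarrow> nat) \<Rightarrow> nat \<Rightarrow> (nat \<times> nat list) \<Rightarrow> (nat \<times> nat list) \<Rightarrow> real" where
  "Mmat n d1 s d2 nb \<phi> EH i =
     (let V = prod_vertices n d1 s; IA = I_tensor (norm_adj d2 EH) in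
      mat_mul V (mat_mul V IA (Gmat nb \<phi> (i mod s))) IA)"

text \<open>z in F_2^[n] is encoded as a boolean function (True = 1).\<close>
definition sgn_bit :: "bool \<Rightarrow> real" where
  "sgn_bit b = (if b then -1 else 1)"

definition bias :: "nat \<Rightarrow> (nat \<Rightarrow> bool) \<Rightarrow> real" where
  "bias n z = \<bar>(\<Sum>v<n. sgn_bit (z v)) / real n\<bar>"

definition Pz :: "(nat \<Rightarrow> bool) \<Rightarrow> (nat \<times> nat list) \<Rightarrow> (nat \<times> nat list) \<Rightarrow> real" where
  "Pz z = (\<lambda>p q. if p = q then sgn_bit (z (fst p)) else 0)"

fun walk_prod :: "(nat \<times> nat list) set \<Rightarrow> (nat \<Rightarrow> (nat \<times> nat list) \<Rightarrow> (nat \<times> nat list) \<Rightarrow> real)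
    \<Rightarrow> ((nat \<times> nat list) \<Rightarrow> (nat \<times> nat list) \<Rightarrow> real) \<Rightarrow> nat \<Rightarrow> (nat \<times> nat list) \<Rightarrow> (nat \<times> nat list) \<Rightarrow> real" where
  "walk_prod V M P 0 = mat_id"
| "walk_prod V M P (Suc k) = mat_mul V (mat_mul V (M k) P) (walk_prod V M P k)"

end

theory Submission
  imports Defs "HOL-Analysis.L2_Norm"
begin


definition nsq :: "'i set \<Rightarrow> ('i \<Rightarrow> real) \<Rightarrow> real" where
  "nsq V x = (\<Sum>p\<in>V. (x p)^2)"

lemma vnorm_nsq: "vnorm V x = sqrt (nsq V x)"
  by (simp add: vnorm_def vinner_def nsq_def power2_eq_square)

lemma vnorm_L2: "vnorm V x = L2_set x V"
  by (simp add: vnorm_nsq nsq_def L2_set_def)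

lemma nsq_nonneg: "0 \<le> nsq V x"
  by (simp add: nsq_def sum_nonneg)

lemma vnorm_nonneg: "0 \<le> vnorm V x"
  by (simp add: vnorm_nsq nsq_nonneg)

lemma nsq_cong: "(\<And>p. p \<in> V \<Longrightarrow> x p = y p) \<Longrightarrow> nsq V x = nsq V y"
  by (simp add: nsq_def)

lemma vnorm_cong: "(\<And>p. p \<in> V \<Longrightarrow> x p = y p) \<Longrightarrow> vnorm V x = vnorm V y"
  by (simp add: vnorm_nsq cong: nsq_cong)

lemma mv_cong: "(\<And>p. p \<in> V \<Longrightarrow> x p = y p) \<Longrightarrow> mat_vec V A x = mat_vec V A y"
  by (simp add: mat_vec_def)

lemma mv_add: "mat_vec V A (\<lambda>p. x p + y p) = (\<lambda>p. mat_vec V A x p + mat_vec V A y p)"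
  by (simp add: mat_vec_def distrib_left sum.distrib)

lemma mv_scale: "mat_vec V A (\<lambda>p. c * x p) = (\<lambda>p. c * mat_vec V A x p)"
  by (auto simp: mat_vec_def sum_distrib_left mult_ac intro!: ext)

lemma mv_mul: "mat_vec V (mat_mul V A B) x = mat_vec V A (mat_vec V B x)"
  unfolding mat_vec_def mat_mul_def
  by (auto simp: sum_distrib_left sum_distrib_right mult_ac intro!: ext; rule sum.swap)

lemma vnorm_scale: "vnorm V (\<lambda>p. c * x p) = \<bar>c\<bar> * vnorm V x"
  by (simp add: vnorm_nsq nsq_def power_mult_distrib real_sqrt_mult flip: sum_distrib_left)

lemma vnorm_const: "vnorm V (\<lambda>p. c) = \<bar>c\<bar> * sqrt (real (card V))"
  by (simp add: vnorm_nsq nsq_def real_sqrt_mult)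

lemma vnorm_tri: "vnorm V (\<lambda>p. x p + y p) \<le> vnorm V x + vnorm V y"
  unfolding vnorm_L2 by (rule L2_set_triangle_ineq)

lemma pyth: assumes "finite V" "sum y V = 0"
  shows "nsq V (\<lambda>p. c + y p) = c^2 * real (card V) + nsq V y"
proof -
  have "nsq V (\<lambda>p. c + y p) = (\<Sum>p\<in>V. c^2 + 2*c*y p + (y p)^2)"
    unfolding nsq_def by (rule sum.cong) (auto simp: power2_eq_square algebra_simps)
  also have "\<dots> = c^2 * real (card V) + 2*c*sum y V + nsq V y"
    by (simp add: sum.distrib nsq_def sum_distrib_left)
  finally show ?thesis using assms by simp
qed

lemma jensen_sq:
  fixes a y :: "'i \<Rightarrow> real"
  assumes "finite V" "\<And>q. q \<in> V \<Longrightarrow> 0 \<le> a q" "sum a V = 1"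
  shows "(\<Sum>q\<in>V. a q * y q)^2 \<le> (\<Sum>q\<in>V. a q * (y q)^2)"
proof -
  define m where "m = (\<Sum>q\<in>V. a q * y q)"
  have "0 \<le> (\<Sum>q\<in>V. a q * (y q - m)^2)"
    using assms by (intro sum_nonneg) auto
  also have "\<dots> = (\<Sum>q\<in>V. a q * (y q)^2 - 2 * m * (a q * y q) + m^2 * a q)"
    by (rule sum.cong) (auto simp: power2_eq_square algebra_simps)
  also have "\<dots> = (\<Sum>q\<in>V. a q * (y q)^2) - 2 * m * m + m^2 * sum a V"
    by (simp add: sum.distrib sum_subtractf sum_distrib_left m_def)
  finally show ?thesis using assms(3) by (simp add: m_def power2_eq_square)
qed



definition good :: "'i set \<Rightarrow> ('i \<Rightarrow> 'i \<Rightarrow> real) \<Rightarrow> bool" where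
  "good V M \<longleftrightarrow> (\<forall>p\<in>V. mat_vec V M (\<lambda>_. 1) p = 1) \<and> (\<forall>y. sum (mat_vec V M y) V = sum y V)
     \<and> (\<forall>y. nsq V (mat_vec V M y) \<le> nsq V y)"

definition DS :: "'i set \<Rightarrow> ('i \<Rightarrow> 'i \<Rightarrow> real) \<Rightarrow> bool" where
  "DS V A \<longleftrightarrow> (\<forall>p\<in>V. \<forall>q\<in>V. 0 \<le> A p q) \<and> (\<forall>p\<in>V. (\<Sum>q\<in>V. A p q) = 1) \<and> (\<forall>q\<in>V. (\<Sum>p\<in>V. A p q) = 1)"

lemma good_vnorm: "good V M \<Longrightarrow> vnorm V (mat_vec V M y) \<le> vnorm V y"
  unfolding good_def vnorm_nsq by auto

lemma good_mul: assumes "good V A" "good V B" shows "good V (mat_mul V A B)"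
proof -
  have "\<forall>p\<in>V. mat_vec V A (mat_vec V B (\<lambda>_. 1)) p = 1"
  proof
    fix p assume "p \<in> V"
    have "mat_vec V A (mat_vec V B (\<lambda>_. 1)) = mat_vec V A (\<lambda>_. 1)"
      using assms(2) by (intro mv_cong) (auto simp: good_def)
    then show "mat_vec V A (mat_vec V B (\<lambda>_. 1)) p = 1" using assms(1) \<open>p \<in> V\<close> by (auto simp: good_def)
  qed
  moreover have "\<forall>y. nsq V (mat_vec V A (mat_vec V B y)) \<le> nsq V y"
    using assms unfolding good_def by (meson order_trans)
  ultimately show ?thesis using assms by (simp add: good_def mv_mul)
qed

lemma DS_good: assumes "finite V" "DS V A" shows "good V A"
proof -
  have r: "\<And>p. p \<in> V \<Longrightarrow> (\<Sum>q\<in>V. A p q) = 1" and c: "\<And>q. q \<in> V \<Longrightarrow> (\<Sum>p\<in>V. A p q) = 1"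
    and nn: "\<And>p q. p \<in> V \<Longrightarrow> q \<in> V \<Longrightarrow> 0 \<le> A p q" using assms(2) by (auto simp: DS_def)
  have 1: "\<forall>p\<in>V. mat_vec V A (\<lambda>_. 1) p = 1" using r by (simp add: mat_vec_def)
  have 2: "sum (mat_vec V A y) V = sum y V" for y
  proof -
    have "sum (mat_vec V A y) V = (\<Sum>q\<in>V. (\<Sum>p\<in>V. A p q) * y q)"
      unfolding mat_vec_def by (simp add: sum_distrib_right) (rule sum.swap)
    also have "\<dots> = sum y V" using c by simp
    finally show ?thesis .
  qed
  have 3: "nsq V (mat_vec V A y) \<le> nsq V y" for y
  proof -
    have "nsq V (mat_vec V A y) \<le> (\<Sum>p\<in>V. \<Sum>q\<in>V. A p q * (y q)^2)"
      unfolding nsq_def mat_vec_def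
      by (rule sum_mono, rule jensen_sq) (use assms(1) r nn in auto)
    also have "\<dots> = (\<Sum>q\<in>V. (\<Sum>p\<in>V. A p q) * (y q)^2)"
      by (simp add: sum_distrib_right) (rule sum.swap)
    also have "\<dots> = nsq V y" using c by (simp add: nsq_def)
    finally show ?thesis .
  qed
  show ?thesis using 1 2 3 by (simp add: good_def)
qed



lemma sigma2_orth_unit:
  assumes fin: "finite V" and ne: "V \<noteq> {}" and g: "good V M" and s2: "sigma2 V M \<le> \<gamma>"
    and y0: "sum y V = 0" and y1: "vnorm V y = 1"
  shows "vnorm V (mat_vec V M y) \<le> \<gamma>"
proof -
  define N where "N = real (card V)"
  have Npos: "N > 0" using fin ne by (simp add: N_def card_gt_0_iff)
  have ny1: "nsq V y = 1" using y1 by (simp add: vnorm_nsq nsq_nonneg)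
  have My1: "vnorm V (mat_vec V M y) \<le> 1" using good_vnorm[OF g, of y] y1 by simp
  have nMy1: "nsq V (mat_vec V M y) \<le> 1" using g ny1 unfolding good_def by metis
  have M1: "\<And>p. p \<in> V \<Longrightarrow> mat_vec V M (\<lambda>_. 1) p = 1" using g by (auto simp: good_def)
  have sumM: "\<And>f. sum (mat_vec V M f) V = sum f V" using g by (auto simp: good_def)
  define S where "S w = {vnorm V (mat_vec V M x) | x. vnorm V x \<le> 1 \<and> vinner V x w = 0}" for w
  have bdd: "bdd_above (S w)" for w
    unfolding S_def by (rule bdd_aboveI[of _ 1]) (use good_vnorm[OF g] order_trans in blast)
  have key: "vnorm V (mat_vec V M y) \<le> Sup (S w)" for w
  proof -
    have "\<exists>x. vnorm V x \<le> 1 \<and> vinner V x w = 0 \<and> vnorm V (mat_vec V M y) \<le> vnorm V (mat_vec V M x)"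
    proof (cases "sum w V = 0")
      case True
      define c where "c = 1 / sqrt N"
      define x where "x = (\<lambda>p::'a. c * 1)"
      have "vnorm V x = 1" using Npos by (simp add: x_def vnorm_const c_def N_def)
      moreover have "vinner V x w = 0" using True by (simp add: x_def vinner_def flip: sum_distrib_left)
      moreover have "vnorm V (mat_vec V M x) = 1"
      proof -
        have "mat_vec V M x = (\<lambda>p. c * mat_vec V M (\<lambda>_. 1) p)"
          unfolding x_def by (rule mv_scale)
        then have "vnorm V (mat_vec V M x) = vnorm V (\<lambda>p. c)"
          by (auto intro: vnorm_cong simp: M1)
        then show ?thesis using Npos by (simp add: vnorm_const c_def N_def)
      qed
      ultimately show ?thesis using My1 by (intro exI[of _ x]) auto
    next
      case False
      define c1 where "c1 = sum w V"
      define c2 where "c2 = vinner V y w"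
      define x0 where "x0 = (\<lambda>p. c2 + (- c1) * y p)"
      have sy: "sum (\<lambda>p. (- c1) * y p) V = 0"
        using y0 sum_distrib_left[of "- c1" y V, symmetric] by simp
      have "vinner V x0 w = (\<Sum>p\<in>V. c2 * w p - c1 * (y p * w p))"
        unfolding x0_def vinner_def by (rule sum.cong) (auto simp: algebra_simps)
      also have "\<dots> = c2 * sum w V - c1 * vinner V y w"
        by (simp add: sum_subtractf vinner_def sum_distrib_left)
      finally have ix0: "vinner V x0 w = 0" by (simp add: c1_def c2_def)
      have nx0: "nsq V x0 = c2^2 * N + c1^2"
        unfolding x0_def using pyth[OF fin sy, of c2] ny1
        by (simp add: N_def nsq_def power_mult_distrib flip: sum_distrib_left)
      have Mx0: "mat_vec V M x0 = (\<lambda>p. c2 * mat_vec V M (\<lambda>_. 1) p + (- c1) * mat_vec V M y p)"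
        by (auto simp: x0_def mat_vec_def algebra_simps sum.distrib sum_subtractf sum_distrib_left sum_negf intro!: ext)
      have sMy: "sum (\<lambda>p. (- c1) * mat_vec V M y p) V = 0"
        using sumM[of y] y0 by (simp add: sum_negf flip: sum_distrib_left)
      have nMx0: "nsq V (mat_vec V M x0) = c2^2 * N + c1^2 * nsq V (mat_vec V M y)"
      proof -
        have "nsq V (mat_vec V M x0) = nsq V (\<lambda>p. c2 + (- c1) * mat_vec V M y p)"
          by (rule nsq_cong) (simp add: Mx0 M1)
        also have "\<dots> = c2^2 * N + c1^2 * nsq V (mat_vec V M y)"
          using pyth[OF fin sMy, of c2]
          by (simp add: N_def nsq_def power_mult_distrib flip: sum_distrib_left)
        finally show ?thesis .
      qed
      have c1pos: "c1^2 > 0" using False by (simp add: c1_def)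
      have nx0pos: "nsq V x0 > 0" using nx0 c1pos Npos
        by (metis add_nonneg_pos mult_nonneg_nonneg less_le zero_le_power2)
      define r where "r = vnorm V x0"
      have rpos: "r > 0" using nx0pos by (simp add: r_def vnorm_nsq)
      define x where "x = (\<lambda>p. (1 / r) * x0 p)"
      have "vnorm V x = 1" using rpos vnorm_scale[of V "1/r" x0] by (simp add: x_def r_def)
      moreover have "vinner V x w = 0" using ix0
        by (simp add: x_def vinner_def flip: sum_divide_distrib)
      moreover have "vnorm V (mat_vec V M y) \<le> vnorm V (mat_vec V M x)"
      proof -
        have "nsq V x0 * nsq V (mat_vec V M y) \<le> nsq V (mat_vec V M x0)"
          using nMx0 nx0 nMy1 Npos
          by (smt (verit, ccfv_SIG) mult_left_le zero_le_power2 distrib_right mult_nonneg_nonneg nsq_nonneg)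
        then have "r * vnorm V (mat_vec V M y) \<le> vnorm V (mat_vec V M x0)"
          by (simp add: r_def vnorm_nsq flip: real_sqrt_mult)
        then have "vnorm V (mat_vec V M y) \<le> (1/r) * vnorm V (mat_vec V M x0)"
          using rpos by (simp add: field_simps)
        also have "\<dots> = vnorm V (mat_vec V M x)"
          using rpos vnorm_scale[of V "1/r" "mat_vec V M x0"] mv_scale[of V M "1/r" x0] by (simp add: x_def)
        finally show ?thesis .
      qed
      ultimately show ?thesis by (intro exI[of _ x]) auto
    qed
    then obtain x where "vnorm V x \<le> 1" "vinner V x w = 0" "vnorm V (mat_vec V M y) \<le> vnorm V (mat_vec V M x)"
      by blast
    then show ?thesis
      by (intro cSup_upper2[OF _ _ bdd]) (auto simp: S_def)
  qed
  have "vnorm V (mat_vec V M y) \<le> Inf {Sup (S w) | w. True}"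
    by (rule cInf_greatest) (use key in auto)
  also have "\<dots> = sigma2 V M" by (simp add: sigma2_def S_def)
  finally show ?thesis using s2 by simp
qed

lemma sigma2_orth:
  assumes fin: "finite V" and ne: "V \<noteq> {}" and g: "good V M" and s2: "sigma2 V M \<le> \<gamma>"
    and y0: "sum y V = 0"
  shows "vnorm V (mat_vec V M y) \<le> \<gamma> * vnorm V y"
proof (cases "vnorm V y = 0")
  case True
  then show ?thesis using good_vnorm[OF g, of y] vnorm_nonneg[of V "mat_vec V M y"] by simp
next
  case False
  define r where "r = vnorm V y"
  have rpos: "r > 0" using False vnorm_nonneg[of V y] by (simp add: r_def)
  define y' where "y' = (\<lambda>p. (1/r) * y p)"
  have "sum y' V = 0" using y0 by (simp add: y'_def flip: sum_divide_distrib)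
  moreover have "vnorm V y' = 1" using rpos vnorm_scale[of V "1/r" y] by (simp add: y'_def r_def)
  ultimately have "vnorm V (mat_vec V M y') \<le> \<gamma>" using sigma2_orth_unit[OF fin ne g s2] by blast
  moreover have "mat_vec V M y' = (\<lambda>p. (1/r) * mat_vec V M y p)" unfolding y'_def by (rule mv_scale)
  ultimately have "(1/r) * vnorm V (mat_vec V M y) \<le> \<gamma>" using rpos vnorm_scale[of V "1/r" "mat_vec V M y"] by simp
  then show ?thesis using rpos by (simp add: r_def field_simps)
qed



lemma mv_affine: "mat_vec V A (\<lambda>p. c * f p + g p) = (\<lambda>p. c * mat_vec V A f p + mat_vec V A g p)"
  by (simp add: mat_vec_def distrib_left sum.distrib sum_distrib_left mult_ac)

lemma pair_bound:
  fixes \<sigma> :: "'i \<Rightarrow> real"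
  assumes fin: "finite V" and ne: "V \<noteq> {}"
    and gM: "good V M" and gM': "good V M'"
    and oM: "\<And>y. sum y V = 0 \<Longrightarrow> vnorm V (mat_vec V M y) \<le> \<gamma> * vnorm V y"
    and oM': "\<And>y. sum y V = 0 \<Longrightarrow> vnorm V (mat_vec V M' y) \<le> \<gamma> * vnorm V y"
    and P: "\<And>x p. p \<in> V \<Longrightarrow> mat_vec V P x p = \<sigma> p * x p"
    and sq: "\<And>p. p \<in> V \<Longrightarrow> (\<sigma> p)^2 = 1"
    and bias: "\<bar>sum \<sigma> V\<bar> \<le> \<eta> * real (card V)"
    and g0: "0 \<le> \<gamma>"
  shows "vnorm V (mat_vec V M' (mat_vec V P (mat_vec V M (mat_vec V P x)))) \<le> (\<eta> + 2*\<gamma>) * vnorm V x"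
proof -
  define N where "N = real (card V)"
  have Npos: "N > 0" using fin ne by (simp add: N_def card_gt_0_iff)
  have M1: "\<And>p. p \<in> V \<Longrightarrow> mat_vec V M (\<lambda>_. 1) p = 1" using gM by (auto simp: good_def)
  have M'1: "\<And>p. p \<in> V \<Longrightarrow> mat_vec V M' (\<lambda>_. 1) p = 1" using gM' by (auto simp: good_def)
  have Pn: "vnorm V (mat_vec V P f) = vnorm V f" for f
  proof -
    have "nsq V (mat_vec V P f) = nsq V f"
      unfolding nsq_def by (rule sum.cong) (auto simp: P power_mult_distrib sq)
    then show ?thesis by (simp add: vnorm_nsq)
  qed
  define u where "u = mat_vec V P x"
  define a where "a = sum u V / N"
  define y where "y p = u p - a" for p
  have sy: "sum y V = 0" using Npos by (simp add: y_def a_def sum_subtractf N_def)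
  have uy: "u = (\<lambda>p. a + y p)" by (simp add: y_def)
  have nu: "nsq V u = a^2 * N + nsq V y" using pyth[OF fin sy, of a] uy by (simp add: N_def)
  have vu: "vnorm V u = vnorm V x" by (simp add: u_def Pn)
  have ay: "\<bar>a\<bar> * sqrt N \<le> vnorm V x" and yu: "vnorm V y \<le> vnorm V x"
  proof -
    have "(\<bar>a\<bar> * sqrt N)^2 \<le> nsq V u" using nu Npos nsq_nonneg[of V y]
      by (simp add: power_mult_distrib)
    then have "\<bar>a\<bar> * sqrt N \<le> sqrt (nsq V u)" by (simp add: real_le_rsqrt)
    then show "\<bar>a\<bar> * sqrt N \<le> vnorm V x" using vu by (simp add: vnorm_nsq)
    have "nsq V y \<le> nsq V u" using nu Npos by simp
    then show "vnorm V y \<le> vnorm V x" using vu by (simp add: vnorm_nsq)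
  qed
  define b where "b = sum \<sigma> V / N"
  define w where "w p = \<sigma> p - b" for p
  have sw: "sum w V = 0" using Npos by (simp add: w_def b_def sum_subtractf N_def)
  have \<sigma>w: "\<sigma> = (\<lambda>p. b + w p)" by (simp add: w_def)
  have nsig: "nsq V \<sigma> = N" using sq by (simp add: nsq_def N_def)
  have wN: "vnorm V w \<le> sqrt N"
  proof -
    have "0 \<le> b^2 * N" using Npos by simp
    moreover have "b^2 * N + nsq V w = N" using pyth[OF fin sw, of b] \<sigma>w nsig by (simp add: N_def)
    ultimately have "nsq V w \<le> N" by linarith
    then show ?thesis by (simp add: vnorm_nsq)
  qed
  have b_eta: "\<bar>b\<bar> \<le> \<eta>"
  proof -
    have "\<bar>b\<bar> = \<bar>sum \<sigma> V\<bar> / N" using Npos by (simp add: b_def)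
    also have "\<dots> \<le> \<eta>" using bias Npos by (simp add: pos_divide_le_eq N_def)
    finally show ?thesis .
  qed
  define m where "m = mat_vec V M y"
  define t where "t = mat_vec V P m"
  have Mu: "mat_vec V M u = (\<lambda>p. a * mat_vec V M (\<lambda>_. 1) p + m p)"
    using mv_affine[of V M a "\<lambda>_. 1" y] by (simp add: uy m_def)
  have PMu: "mat_vec V P (mat_vec V M u) p = a * \<sigma> p + t p" if "p \<in> V" for p
    using that by (simp add: P Mu M1 t_def distrib_left mult.commute)
  have M'\<sigma>: "mat_vec V M' \<sigma> = (\<lambda>p. b * mat_vec V M' (\<lambda>_. 1) p + mat_vec V M' w p)"
    using mv_affine[of V M' b "\<lambda>_. 1" w] by (subst \<sigma>w) simp
  have "mat_vec V M' (mat_vec V P (mat_vec V M u)) = mat_vec V M' (\<lambda>p. a * \<sigma> p + t p)"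
    by (rule mv_cong) (simp add: PMu)
  also have "\<dots> = (\<lambda>p. a * mat_vec V M' \<sigma> p + mat_vec V M' t p)"
    by (rule mv_affine)
  finally have fin_eq: "mat_vec V M' (mat_vec V P (mat_vec V M u)) = (\<lambda>p. a * mat_vec V M' \<sigma> p + mat_vec V M' t p)" .
  have "vnorm V (mat_vec V M' (mat_vec V P (mat_vec V M u)))
      = vnorm V (\<lambda>p. ((\<lambda>p. a * b) p + (\<lambda>p. a * mat_vec V M' w p) p) + mat_vec V M' t p)"
    by (rule vnorm_cong) (simp add: fin_eq M'\<sigma> M'1 algebra_simps)
  also have "\<dots> \<le> vnorm V (\<lambda>p. (\<lambda>p. a * b) p + (\<lambda>p. a * mat_vec V M' w p) p) + vnorm V (mat_vec V M' t)"
    by (rule vnorm_tri)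
  also have "\<dots> \<le> (vnorm V (\<lambda>p. a * b) + vnorm V (\<lambda>p. a * mat_vec V M' w p)) + vnorm V (mat_vec V M' t)"
    by (rule add_right_mono, rule vnorm_tri)
  also have "\<dots> \<le> (\<eta> * vnorm V x + \<gamma> * vnorm V x) + \<gamma> * vnorm V x"
  proof (intro add_mono)
    have "vnorm V (\<lambda>p. a * b) = \<bar>b\<bar> * (\<bar>a\<bar> * sqrt N)" by (simp add: vnorm_const N_def abs_mult)
    also have "\<dots> \<le> \<eta> * vnorm V x" using b_eta ay Npos
      by (intro mult_mono) (auto simp: vnorm_nonneg)
    finally show "vnorm V (\<lambda>p. a * b) \<le> \<eta> * vnorm V x" .
    have "vnorm V (\<lambda>p. a * mat_vec V M' w p) = \<bar>a\<bar> * vnorm V (mat_vec V M' w)" by (rule vnorm_scale)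
    also have "\<dots> \<le> \<bar>a\<bar> * (\<gamma> * sqrt N)"
    proof -
      have "vnorm V (mat_vec V M' w) \<le> \<gamma> * sqrt N"
        using oM'[OF sw] mult_left_mono[OF wN g0] by linarith
      then show ?thesis by (rule mult_left_mono) simp
    qed
    also have "\<dots> = \<gamma> * (\<bar>a\<bar> * sqrt N)" by simp
    also have "\<dots> \<le> \<gamma> * vnorm V x" using ay g0 by (intro mult_left_mono)
    finally show "vnorm V (\<lambda>p. a * mat_vec V M' w p) \<le> \<gamma> * vnorm V x" .
    have "vnorm V (mat_vec V M' t) \<le> vnorm V t" by (rule good_vnorm[OF gM'])
    also have "\<dots> = vnorm V m" by (simp add: t_def Pn)
    also have "\<dots> \<le> \<gamma> * vnorm V y" unfolding m_def by (rule oM[OF sy])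
    also have "\<dots> \<le> \<gamma> * vnorm V x" using yu g0 by (intro mult_left_mono)
    finally show "vnorm V (mat_vec V M' t) \<le> \<gamma> * vnorm V x" .
  qed
  finally show ?thesis by (simp add: u_def algebra_simps)
qed



lemma P_vnorm:
  fixes \<sigma> :: "'i \<Rightarrow> real"
  assumes P: "\<And>x p. p \<in> V \<Longrightarrow> mat_vec V P x p = \<sigma> p * x p"
    and sq: "\<And>p. p \<in> V \<Longrightarrow> (\<sigma> p)^2 = 1"
  shows "vnorm V (mat_vec V P f) = vnorm V f"
proof -
  have "nsq V (mat_vec V P f) = nsq V f"
    unfolding nsq_def by (rule sum.cong) (auto simp: P power_mult_distrib sq)
  then show ?thesis by (simp add: vnorm_nsq)
qed

lemma id_vnorm: "finite V \<Longrightarrow> vnorm V (mat_vec V mat_id x) = vnorm V x"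
  by (rule vnorm_cong) (simp_all add: mat_vec_def mat_id_def if_distrib[of "\<lambda>u. u * _"] sum.delta sum.delta' cong: if_cong)

lemma walk_unfold: fixes V :: "(nat \<times> nat list) set" shows "mat_vec V (walk_prod V M P (Suc k)) x = mat_vec V (M k) (mat_vec V P (mat_vec V (walk_prod V M P k) x))"
  by (simp add: mv_mul)

lemma walk_gen:
  fixes \<sigma> :: "nat \<times> nat list \<Rightarrow> real" and V :: "(nat \<times> nat list) set"
  assumes fin: "finite V" and ne: "V \<noteq> {}"
    and g: "\<And>i. good V (Mf i)"
    and orth: "\<And>i y. i + 2 \<le> s \<Longrightarrow> sum y V = 0 \<Longrightarrow> vnorm V (mat_vec V (Mf i) y) \<le> \<gamma> * vnorm V y"
    and P: "\<And>x p. p \<in> V \<Longrightarrow> mat_vec V P x p = \<sigma> p * x p"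
    and sq: "\<And>p. p \<in> V \<Longrightarrow> (\<sigma> p)^2 = 1"
    and bias: "\<bar>sum \<sigma> V\<bar> \<le> \<eta> * real (card V)"
    and g0: "0 \<le> \<gamma>" and e0: "0 \<le> \<eta>"
  shows "k \<le> s - 1 \<Longrightarrow> vnorm V (mat_vec V (walk_prod V Mf P k) x) \<le> (\<eta> + 2*\<gamma>)^(k div 2) * vnorm V x"
proof (induction k arbitrary: x rule: less_induct)
  case (less k)
  show ?case
  proof (cases k)
    case 0
    then show ?thesis by (simp add: id_vnorm[OF fin])
  next
    case (Suc k')
    show ?thesis
    proof (cases k')
      case 0
      have "vnorm V (mat_vec V (walk_prod V Mf P k) x)
          = vnorm V (mat_vec V (Mf 0) (mat_vec V P (mat_vec V (walk_prod V Mf P 0) x)))"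
        using Suc 0 by (simp only: walk_unfold)
      also have "\<dots> \<le> vnorm V (mat_vec V P (mat_vec V (walk_prod V Mf P 0) x))"
        by (rule good_vnorm[OF g])
      also have "\<dots> = vnorm V x" by (simp add: P_vnorm[OF P sq] id_vnorm[OF fin])
      finally show ?thesis using Suc 0 by simp
    next
      case (Suc j)
      have kj: "k = Suc (Suc j)" using \<open>k = Suc k'\<close> Suc by simp
      have "vnorm V (mat_vec V (walk_prod V Mf P k) x)
          = vnorm V (mat_vec V (Mf (Suc j)) (mat_vec V P (mat_vec V (Mf j) (mat_vec V P (mat_vec V (walk_prod V Mf P j) x)))))"
        using kj by (simp only: walk_unfold)
      also have "\<dots> \<le> (\<eta> + 2*\<gamma>) * vnorm V (mat_vec V (walk_prod V Mf P j) x)"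
        by (rule pair_bound[OF fin ne g g _ _ P sq bias g0])
          (use less.prems kj orth in auto)
      also have "\<dots> \<le> (\<eta> + 2*\<gamma>) * ((\<eta> + 2*\<gamma>)^(j div 2) * vnorm V x)"
        using less.IH[of j x] less.prems kj g0 e0 by (intro mult_left_mono) auto
      also have "\<dots> = (\<eta> + 2*\<gamma>)^(k div 2) * vnorm V x" using kj by simp
      finally show ?thesis .
    qed
  qed
qed

lemma op_norm_le:
  assumes "\<And>x. vnorm V (mat_vec V A x) \<le> B * vnorm V x" "0 \<le> B"
  shows "op_norm V A \<le> B"
  unfolding op_norm_def
proof (rule cSup_least)
  show "{vnorm V (mat_vec V A x) |x. vnorm V x \<le> 1} \<noteq> {}"
    by (rule ccontr) (auto simp: vnorm_nsq nsq_def elim!: allE[of _ "\<lambda>_. 0"])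
  show "\<And>u. u \<in> {vnorm V (mat_vec V A x) |x. vnorm V x \<le> 1} \<Longrightarrow> u \<le> B"
  proof -
    fix u assume "u \<in> {vnorm V (mat_vec V A x) |x. vnorm V x \<le> 1}"
    then obtain x where "u = vnorm V (mat_vec V A x)" "vnorm V x \<le> 1" by blast
    then show "u \<le> B" using assms(1)[of x] mult_left_mono[OF \<open>vnorm V x \<le> 1\<close> assms(2)] by simp
  qed
qed



lemma tuples_finite: "finite (tuples d1 s)"
proof -
  have "tuples d1 s \<subseteq> {xs. set xs \<subseteq> {..<d1} \<and> length xs = s}" by (auto simp: tuples_def)
  then show ?thesis by (rule finite_subset) (rule finite_lists_length_eq, simp)
qed

lemma tuples_ne: "d1 \<ge> 1 \<Longrightarrow> replicate s 0 \<in> tuples d1 s"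
  by (auto simp: tuples_def)

lemma sum_prod_split: "(\<Sum>q\<in>A \<times> B. F q) = (\<Sum>w\<in>A. \<Sum>b\<in>B. F (w, b))"
  by (simp add: sum.cartesian_product)

lemma Rot_props:
  assumes L: "loc_inv_rotation_graph n d1 nb \<phi>" and i: "i < s" and q: "q \<in> prod_vertices n d1 s"
  shows "Rot nb \<phi> i q \<in> prod_vertices n d1 s" "Rot nb \<phi> i (Rot nb \<phi> i q) = q"
proof -
  obtain v a where qa: "q = (v, a)" by (cases q)
  have v: "v < n" and la: "length a = s" and ea: "\<forall>x\<in>set a. x < d1"
    using q qa by (auto simp: prod_vertices_def tuples_def)
  define j where "j = a ! i"
  have j: "j < d1" using ea i la by (simp add: j_def)
  have bij: "bij_betw \<phi> {..<d1} {..<d1}" and inv: "\<forall>v<n. \<forall>j<d1. nb v j < n \<and> rotG nb \<phi> (rotG nb \<phi> (v, j)) = (v, j)"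
    using L by (auto simp: loc_inv_rotation_graph_def)
  have \<phi>j: "\<phi> j < d1" using bij_betw_apply[OF bij] j by auto
  have nbv: "nb v j < n" using inv v j by auto
  have inv2: "nb (nb v j) (\<phi> j) = v" "\<phi> (\<phi> j) = j" using inv v j by (auto simp: rotG_def)
  have R: "Rot nb \<phi> i q = (nb v j, a[i := \<phi> j])" by (simp add: Rot_def qa j_def)
  show "Rot nb \<phi> i q \<in> prod_vertices n d1 s"
    unfolding R prod_vertices_def tuples_def using nbv la ea \<phi>j
    by (auto dest!: set_update_subset_insert[THEN subsetD])
  show "Rot nb \<phi> i (Rot nb \<phi> i q) = q"
    unfolding R using la i inv2 by (simp add: Rot_def qa j_def)
qed

lemma G_DS:
  assumes L: "loc_inv_rotation_graph n d1 nb \<phi>" and i: "i < s"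
  shows "DS (prod_vertices n d1 s) (Gmat nb \<phi> i)"
proof -
  let ?V = "prod_vertices n d1 s"
  let ?R = "Rot nb \<phi> i"
  have fin: "finite ?V" by (simp add: prod_vertices_def tuples_finite)
  have row: "(\<Sum>q\<in>?V. Gmat nb \<phi> i p q) = 1" if p: "p \<in> ?V" for p
  proof -
    have "(\<Sum>q\<in>?V. Gmat nb \<phi> i p q) = (\<Sum>q\<in>?V. if q = ?R p then 1 else 0)"
    proof (rule sum.cong)
      fix q assume q: "q \<in> ?V"
      have "(p = ?R q) = (q = ?R p)" using Rot_props[OF L i p] Rot_props[OF L i q] by metis
      then show "Gmat nb \<phi> i p q = (if q = ?R p then 1 else 0)" by (simp add: Gmat_def)
    qed simp
    also have "\<dots> = 1" using fin Rot_props(1)[OF L i p] by simp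
    finally show ?thesis .
  qed
  have col: "(\<Sum>p\<in>?V. Gmat nb \<phi> i p q) = 1" if q: "q \<in> ?V" for q
    using fin Rot_props(1)[OF L i q] by (simp add: Gmat_def)
  show ?thesis using row col by (simp add: DS_def Gmat_def)
qed

lemma IA_DS:
  assumes H: "regular_graph_adj (tuples d1 s) d2 EH" and d2: "d2 \<ge> 1"
  shows "DS (prod_vertices n d1 s) (I_tensor (norm_adj d2 EH))"
proof -
  let ?T = "tuples d1 s"
  let ?V = "prod_vertices n d1 s"
  have sym: "\<And>a b. EH a b = EH b a" and rs: "\<And>a. a \<in> ?T \<Longrightarrow> (\<Sum>b\<in>?T. EH a b) = d2"
    using H by (auto simp: regular_graph_adj_def)
  have rs': "(\<Sum>b\<in>?T. real (EH a b) / real d2) = 1" if "a \<in> ?T" for a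
    using rs[OF that] d2 by (simp flip: sum_divide_distrib of_nat_sum)
  have row: "(\<Sum>q\<in>?V. I_tensor (norm_adj d2 EH) p q) = 1" if p: "p \<in> ?V" for p
  proof -
    obtain v a where pa: "p = (v, a)" by (cases p)
    have v: "v < n" and a: "a \<in> ?T" using p pa by (auto simp: prod_vertices_def)
    have "(\<Sum>q\<in>?V. I_tensor (norm_adj d2 EH) p q) = (\<Sum>w<n. \<Sum>b\<in>?T. if v = w then real (EH a b) / real d2 else 0)"
      by (simp add: prod_vertices_def sum_prod_split pa I_tensor_def norm_adj_def)
    also have "\<dots> = (\<Sum>w<n. if v = w then (\<Sum>b\<in>?T. real (EH a b) / real d2) else 0)"
      by (rule sum.cong) auto
    also have "\<dots> = 1" using v rs'[OF a] by simp
    finally show ?thesis .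
  qed
  have col: "(\<Sum>p\<in>?V. I_tensor (norm_adj d2 EH) p q) = 1" if q: "q \<in> ?V" for q
  proof -
    obtain w b where qb: "q = (w, b)" by (cases q)
    have w: "w < n" and b: "b \<in> ?T" using q qb by (auto simp: prod_vertices_def)
    have "(\<Sum>p\<in>?V. I_tensor (norm_adj d2 EH) p q) = (\<Sum>v<n. \<Sum>a\<in>?T. if v = w then real (EH a b) / real d2 else 0)"
      by (simp add: prod_vertices_def sum_prod_split qb I_tensor_def norm_adj_def)
    also have "\<dots> = (\<Sum>v<n. if v = w then (\<Sum>a\<in>?T. real (EH a b) / real d2) else 0)"
      by (rule sum.cong) auto
    also have "\<dots> = (\<Sum>a\<in>?T. real (EH a b) / real d2)" using w by simp
    also have "\<dots> = (\<Sum>a\<in>?T. real (EH b a) / real d2)"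
      by (rule sum.cong) (auto, metis sym)
    also have "\<dots> = 1" using rs'[OF b] by simp
    finally show ?thesis .
  qed
  show ?thesis using row col
    by (auto simp: DS_def I_tensor_def norm_adj_def)
qed



theorem mainTheorem2:
  fixes n d1 d2 s :: nat
    and nb :: "nat \<Rightarrow> nat \<Rightarrow> nat" and \<phi> :: "nat \<Rightarrow> nat"
    and EH :: "nat list \<Rightarrow> nat list \<Rightarrow> nat"
    and z :: "nat \<Rightarrow> bool" and \<eta>0 \<gamma> :: real
  assumes "n \<ge> 1" and "d1 \<ge> 1" and "d2 \<ge> 1" and "s \<ge> 1"
    and "loc_inv_rotation_graph n d1 nb \<phi>"
    and "regular_graph_adj (tuples d1 s) d2 EH"
    and "bias n z \<le> \<eta>0"
    and "\<gamma> \<ge> 0"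
    and "\<forall>i. i + 2 \<le> s \<longrightarrow>
           sigma2 (prod_vertices n d1 s) (Mmat n d1 s d2 nb \<phi> EH i) \<le> \<gamma>"
  shows "op_norm (prod_vertices n d1 s)
           (walk_prod (prod_vertices n d1 s) (Mmat n d1 s d2 nb \<phi> EH) (Pz z) (s - 1))
         \<le> (\<eta>0 + 2 * \<gamma>) ^ ((s - 1) div 2)"
proof -
  let ?V = "prod_vertices n d1 s"
  let ?T = "tuples d1 s"
  let ?Mf = "Mmat n d1 s d2 nb \<phi> EH"
  define \<sigma> where "\<sigma> p = sgn_bit (z (fst p))" for p :: "nat \<times> nat list"
  have fin: "finite ?V" by (simp add: prod_vertices_def tuples_finite)
  have "(0, replicate s 0) \<in> ?V"
    using assms(1) tuples_ne[OF assms(2), of s] by (simp add: prod_vertices_def)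
  then have ne: "?V \<noteq> {}" by blast
  have g: "good ?V (?Mf i)" for i
  proof -
    have "i mod s < s" using assms(4) by simp
    then show ?thesis
      unfolding Mmat_def Let_def
      by (intro good_mul DS_good fin IA_DS assms(6) assms(3) G_DS assms(5))
  qed
  have orth: "vnorm ?V (mat_vec ?V (?Mf i) y) \<le> \<gamma> * vnorm ?V y"
    if "i + 2 \<le> s" "sum y ?V = 0" for i y
    using sigma2_orth[OF fin ne g] assms(9) that by blast
  have P: "mat_vec ?V (Pz z) x p = \<sigma> p * x p" if "p \<in> ?V" for x p
    using fin that by (simp add: mat_vec_def Pz_def \<sigma>_def if_distrib[of "\<lambda>u. u * _"] sum.delta sum.delta' cong: if_cong)
  have sq: "(\<sigma> p)^2 = 1" for p by (simp add: \<sigma>_def sgn_bit_def)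
  define S where "S = (\<Sum>v<n. sgn_bit (z v))"
  have b0: "0 \<le> bias n z" by (simp add: bias_def)
  have e0: "0 \<le> \<eta>0" using b0 assms(7) by linarith
  have npos: "real n > 0" using assms(1) by simp
  have S: "\<bar>S\<bar> \<le> \<eta>0 * real n"
  proof -
    have "bias n z = \<bar>S\<bar> / real n" by (simp add: bias_def S_def abs_divide)
    then have "\<bar>S\<bar> = bias n z * real n" using npos by (simp add: field_simps)
    also have "\<dots> \<le> \<eta>0 * real n" using assms(7) npos by (intro mult_right_mono) auto
    finally show ?thesis .
  qed
  have sumsig: "sum \<sigma> ?V = real (card ?T) * S"
    by (simp add: prod_vertices_def sum_prod_split \<sigma>_def S_def sum_distrib_left)
  have cardV: "real (card ?V) = real n * real (card ?T)"
    by (simp add: prod_vertices_def card_cartesian_product)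
  have bias: "\<bar>sum \<sigma> ?V\<bar> \<le> \<eta>0 * real (card ?V)"
  proof -
    have "\<bar>sum \<sigma> ?V\<bar> = real (card ?T) * \<bar>S\<bar>" by (simp add: sumsig abs_mult)
    also have "\<dots> \<le> real (card ?T) * (\<eta>0 * real n)" by (rule mult_left_mono[OF S]) simp
    also have "\<dots> = \<eta>0 * real (card ?V)" by (simp add: cardV)
    finally show ?thesis .
  qed
  have W: "vnorm ?V (mat_vec ?V (walk_prod ?V ?Mf (Pz z) (s - 1)) x)
      \<le> (\<eta>0 + 2*\<gamma>)^((s - 1) div 2) * vnorm ?V x" for x
    by (rule walk_gen[OF fin ne g orth P sq bias assms(8) e0]) auto
  show ?thesis
    by (rule op_norm_le[OF W]) (use e0 assms(8) in simp)
qed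

end
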